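(* Let $n,m\in\mathbb{N}$, let $f:\mathbb{F}_2^n\to\mathbb{F}_2$ be $m$-bent, and let $h(\mathbf{x})=\mathbf{x}\cdot\mathbf{y}$ for some $\mathbf{y}\in\mathbb{F}_2^n$. When the three-query algorithm $A^{(m)3,3}_n(h,f,f)$ is executed, the probability of measuring the all-zero state $\ket{0^n}$ is nonzero if $\mathbf{y}=0^n$ (i.e. $h$ is the zero function) and is zero if $\mathbf{y}\neq 0^n$ (i.e. $h$ is balanced).
   Context: $\zeta_m=e^{2\pi i/m}$, $\overline{\zeta_m}$ its conjugate; $wt$ is Hamming weight; $\mathbf{x}\cdot\mathbf{y}=\bigoplus_i x_iy_i$. $f$ is $m$-bent if $|\mathcal{H}^{(m)}_f(\boldsymbol{\omega})|=1$ for all $\boldsymbol{\omega}$, where $\mathcal{H}^{(m)}_f(\boldsymbol{\omega})=2^{-n/2}\sum_{\mathbf{x}}(-1)^{f(\mathbf{x})\oplus\mathbf{x}\cdot\boldsymbol{\omega}}\zeta_m^{wt(\mathbf{x})}$. Gates: $\mathrm{H}$ Hadamard; $\Omega_m=\frac{1}{\sqrt2}\begin{pmatrix}1&\zeta_m\\1&-\zeta_m\end{pmatrix}$; $\overline{\Omega}_m=\frac{1}{\sqrt2}\begin{pmatrix}1&\overline{\zeta_m}\\1&-\overline{\zeta_m}\end{pmatrix}$; $U_f$ is the phase oracle $\ket{\mathbf{x}}\mapsto(-1)^{f(\mathbf{x})}\ket{\mathbf{x}}$. Algorithm $A^{(m)3,3}_n(f_1,f_2,f_3)$: from $\ket{0^n}$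 apply in order $\mathrm{H}^{\otimes n}$, $U_{f_2}$, $\Omega_m^{\otimes n}$, $U_{f_1}$, $\mathrm{H}^{\otimes n}$, $U_{f_3}$, $\overline{\Omega}_m^{\otimes n}$, then measure all qubits. *)

theory Defs
  imports Complex_Main
begin

text \<open>Elements of F_2^n are bit strings: boolean lists of length n.
  A quantum state on n qubits is a map from bit strings to amplitudes.\<close>

definition bitstrings :: "nat \<Rightarrow> bool list set" where
  "bitstrings n = {x. length x = n}"

definition zeta :: "nat \<Rightarrow> complex" where
  "zeta m = cis (2 * pi / real m)"

definition dotp :: "bool list \<Rightarrow> bool list \<Rightarrow> bool" where
  "dotp x y = odd (card {i. i < length x \<and> i < length y \<and> x ! i \<and> y ! i})"

definition wt :: "bool list \<Rightarrow> nat" where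
  "wt x = length (filter id x)"

definition sgn1 :: "bool \<Rightarrow> complex" where
  "sgn1 b = (if b then -1 else 1)"

definition walsh_m :: "nat \<Rightarrow> nat \<Rightarrow> (bool list \<Rightarrow> bool) \<Rightarrow> bool list \<Rightarrow> complex" where
  "walsh_m n m f w = (1 / sqrt (2 ^ n)) *
     (\<Sum>x\<in>bitstrings n. sgn1 (f x \<noteq> dotp x w) * zeta m ^ wt x)"

definition m_bent :: "nat \<Rightarrow> nat \<Rightarrow> (bool list \<Rightarrow> bool) \<Rightarrow> bool" where
  "m_bent n m f = (\<forall>w\<in>bitstrings n. cmod (walsh_m n m f w) = 1)"

text \<open>Single-qubit gates as matrices: G out in.\<close>

definition hadamard :: "bool \<Rightarrow> bool \<Rightarrow> complex" where
  "hadamard a b = (if a \<and> b then -1 else 1) / sqrt 2"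

definition omega :: "nat \<Rightarrow> bool \<Rightarrow> bool \<Rightarrow> complex" where
  "omega m a b = (if b then (if a then - zeta m else zeta m) else 1) / sqrt 2"

definition omega_bar :: "nat \<Rightarrow> bool \<Rightarrow> bool \<Rightarrow> complex" where
  "omega_bar m a b = (if b then (if a then - cnj (zeta m) else cnj (zeta m)) else 1) / sqrt 2"

definition tensor_gate :: "nat \<Rightarrow> (bool \<Rightarrow> bool \<Rightarrow> complex) \<Rightarrow>
    (bool list \<Rightarrow> complex) \<Rightarrow> bool list \<Rightarrow> complex" where
  "tensor_gate n G psi x = (\<Sum>y\<in>bitstrings n. (\<Prod>i<n. G (x ! i) (y ! i)) * psi y)"

definition phase_oracle :: "(bool list \<Rightarrow> bool) \<Rightarrow> (bool list \<Rightarrow> complex) \<Rightarrow> bool list \<Rightarrow> complex" where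
  "phase_oracle f psi x = sgn1 (f x) * psi x"

definition zero_state :: "nat \<Rightarrow> bool list \<Rightarrow> complex" where
  "zero_state n x = (if x = replicate n False then 1 else 0)"

definition alg33_state :: "nat \<Rightarrow> nat \<Rightarrow> (bool list \<Rightarrow> bool) \<Rightarrow> (bool list \<Rightarrow> bool) \<Rightarrow>
    (bool list \<Rightarrow> bool) \<Rightarrow> bool list \<Rightarrow> complex" where
  "alg33_state m n f1 f2 f3 =
     tensor_gate n (omega_bar m)
      (phase_oracle f3
       (tensor_gate n hadamard
        (phase_oracle f1
         (tensor_gate n (omega m)
          (phase_oracle f2
           (tensor_gate n hadamard (zero_state n)))))))"

definition alg33_prob :: "nat \<Rightarrow> nat \<Rightarrow> (bool list \<Rightarrow> bool) \<Rightarrow> (bool list \<Rightarrow> bool) \<Rightarrow>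
    (bool list \<Rightarrow> bool) \<Rightarrow> bool list \<Rightarrow> real" where
  "alg33_prob m n f1 f2 f3 z = (cmod (alg33_state m n f1 f2 f3 z))\<^sup>2"

end

theory Submission
  imports Defs
begin
lemma sgn1_xor: "sgn1 (a \<noteq> b) = sgn1 a * sgn1 b"
  by (simp add: sgn1_def)

lemma sgn1_odd: "sgn1 (odd k) = (-1) ^ k"
  by (simp add: sgn1_def)

lemma sgn1_sq: "sgn1 a * sgn1 a = 1"
  by (simp add: sgn1_def)

lemma finite_bitstrings: "finite (bitstrings n)"
  unfolding bitstrings_def using finite_lists_length_eq[of "UNIV::bool set" n] by simp

lemma dotp_prod:
  assumes "length x = n" "length y = n"
  shows "sgn1 (dotp x y) = (\<Prod>i<n. sgn1 (x!i \<and> y!i))"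
proof -
  have "{i. i < length x \<and> i < length y \<and> x ! i \<and> y ! i} = {i\<in>{..<n}. x!i \<and> y!i}"
    using assms by auto
  moreover have "card {i\<in>{..<n}. x!i \<and> y!i} = (\<Sum>i<n. if x!i \<and> y!i then 1 else 0)"
    unfolding card_eq_sum by (rule sum.inter_filter) simp
  ultimately have "card {i. i < length x \<and> i < length y \<and> x ! i \<and> y ! i} = (\<Sum>i<n. if x!i \<and> y!i then 1 else 0)"
    by simp
  hence "sgn1 (dotp x y) = (-1) ^ (\<Sum>i<n. if x!i \<and> y!i then 1 else 0)"
    unfolding dotp_def sgn1_odd by simp
  also have "\<dots> = (\<Prod>i<n. sgn1 (x!i \<and> y!i))"
    by (simp add: power_sum sgn1_def if_distrib cong: if_cong)
  finally show ?thesis .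
qed

lemma dotp_comm: "dotp x y = dotp y x"
proof -
  have "{i. i < length x \<and> i < length y \<and> x ! i \<and> y ! i} = {i. i < length y \<and> i < length x \<and> y ! i \<and> x ! i}"
    by blast
  thus ?thesis unfolding dotp_def by simp
qed

lemma dotp_zero: "dotp x (replicate n False) = False"
proof -
  have "{i. i < length x \<and> i < n \<and> x ! i \<and> replicate n False ! i} = {}"
    by auto
  thus ?thesis unfolding dotp_def length_replicate by (simp only: card.empty) simp
qed

lemma wt_sum: "wt y = (\<Sum>i<length y. if y!i then 1 else 0)"
  unfolding wt_def by (induction y) (auto simp: sum.lessThan_Suc_shift simp del: sum.lessThan_Suc)

abbreviation "s2 \<equiv> complex_of_real (sqrt 2)"

lemma s2_nz: "s2 \<noteq> 0" by simp
lemma s2_sq: "s2 * s2 = 2"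
  by (simp flip: of_real_mult)

lemma prod_had:
  assumes "length x = n" "length y = n"
  shows "(\<Prod>i<n. hadamard (x!i) (y!i)) = sgn1 (dotp x y) / s2 ^ n"
proof -
  have "(\<Prod>i<n. hadamard (x!i) (y!i)) = (\<Prod>i<n. sgn1 (x!i \<and> y!i) / s2)"
    by (rule prod.cong) (auto simp: hadamard_def sgn1_def)
  thus ?thesis using dotp_prod[OF assms] by (simp add: prod_dividef)
qed

lemma prod_omega:
  assumes "length x = n" "length y = n"
  shows "(\<Prod>i<n. omega m (x!i) (y!i)) = zeta m ^ wt y * sgn1 (dotp x y) / s2 ^ n"
proof -
  have "(\<Prod>i<n. omega m (x!i) (y!i)) = (\<Prod>i<n. zeta m ^ (if y!i then 1 else 0) * sgn1 (x!i \<and> y!i) / s2)"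
    by (rule prod.cong) (auto simp: omega_def sgn1_def)
  also have "\<dots> = (\<Prod>i<n. zeta m ^ (if y!i then 1 else 0)) * (\<Prod>i<n. sgn1 (x!i \<and> y!i)) / s2 ^ n"
    by (simp only: prod_dividef prod.distrib prod_constant card_lessThan)
  also have "(\<Prod>i<n. zeta m ^ (if y!i then 1 else 0)) = zeta m ^ wt y"
    unfolding wt_sum power_sum assms(2) ..
  finally show ?thesis using dotp_prod[OF assms] by simp
qed

lemma prod_omega_bar:
  assumes "length x = n" "length y = n"
  shows "(\<Prod>i<n. omega_bar m (x!i) (y!i)) = cnj (zeta m) ^ wt y * sgn1 (dotp x y) / s2 ^ n"
proof -
  have "(\<Prod>i<n. omega_bar m (x!i) (y!i)) = (\<Prod>i<n. cnj (zeta m) ^ (if y!i then 1 else 0) * sgn1 (x!i \<and> y!i) / s2)"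
    by (rule prod.cong) (auto simp: omega_bar_def sgn1_def)
  also have "\<dots> = (\<Prod>i<n. cnj (zeta m) ^ (if y!i then 1 else 0)) * (\<Prod>i<n. sgn1 (x!i \<and> y!i)) / s2 ^ n"
    by (simp only: prod_dividef prod.distrib prod_constant card_lessThan)
  also have "(\<Prod>i<n. cnj (zeta m) ^ (if y!i then 1 else 0)) = cnj (zeta m) ^ wt y"
    unfolding wt_sum power_sum assms(2) ..
  finally show ?thesis using dotp_prod[OF assms] by simp
qed

lemma bs_iff: "x \<in> bitstrings n \<longleftrightarrow> length x = n"
  by (simp add: bitstrings_def)

lemma sum_zero_state:
  "(\<Sum>y\<in>bitstrings n. P y * zero_state n y) = P (replicate n False)"
proof -
  have "(\<Sum>y\<in>bitstrings n. P y * zero_state n y) = (\<Sum>y\<in>bitstrings n. if y = replicate n False then P y else 0)"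
    by (rule sum.cong) (auto simp: zero_state_def)
  also have "\<dots> = P (replicate n False)"
    by (simp add: sum.delta finite_bitstrings bs_iff)
  finally show ?thesis .
qed

lemma st0: assumes "length x = n"
  shows "tensor_gate n hadamard (zero_state n) x = 1 / s2 ^ n"
  unfolding tensor_gate_def sum_zero_state
  using prod_had[OF assms, of "replicate n False"] by (simp add: dotp_zero sgn1_def)

lemma of_real_walsh_factor: "complex_of_real (1 / sqrt (2 ^ n)) = 1 / s2 ^ n"
  by (simp add: real_sqrt_power)

lemma st2: assumes "length w = n"
  shows "tensor_gate n (omega m) (phase_oracle f (tensor_gate n hadamard (zero_state n))) w
     = walsh_m n m f w / s2 ^ n"
proof -
  have "tensor_gate n (omega m) (phase_oracle f (tensor_gate n hadamard (zero_state n))) w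
     = (\<Sum>x\<in>bitstrings n. (zeta m ^ wt x * sgn1 (dotp w x) / s2 ^ n) * (sgn1 (f x) * (1 / s2 ^ n)))"
    unfolding tensor_gate_def[of n "omega m"] phase_oracle_def
    by (rule sum.cong) (auto simp: bs_iff prod_omega assms st0)
  also have "\<dots> = (1 / s2 ^ n) * (1 / s2 ^ n) * (\<Sum>x\<in>bitstrings n. sgn1 (f x \<noteq> dotp x w) * zeta m ^ wt x)"
    unfolding sum_distrib_left
    by (rule sum.cong) (auto simp: sgn1_def dotp_comm[of w])
  also have "\<dots> = walsh_m n m f w / s2 ^ n"
    unfolding walsh_m_def of_real_walsh_factor by simp
  finally show ?thesis .
qed

lemma sgn1_cnj: "cnj (sgn1 b) = sgn1 b"
  by (simp add: sgn1_def)

lemma st4: assumes "length z = n"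
  shows "tensor_gate n hadamard (phase_oracle h
     (tensor_gate n (omega m) (phase_oracle f (tensor_gate n hadamard (zero_state n))))) z
   = (\<Sum>w\<in>bitstrings n. sgn1 (dotp z w) * sgn1 (h w) * walsh_m n m f w / (s2 ^ n * s2 ^ n))"
  unfolding tensor_gate_def[of n hadamard "phase_oracle _ _"] phase_oracle_def[of h]
  by (rule sum.cong) (auto simp: bs_iff prod_had assms st2)

lemma amp:
  assumes "length y = n"
  shows "alg33_state m n (\<lambda>x. dotp x y) f f (replicate n False)
    = (\<Sum>w\<in>bitstrings n. sgn1 (dotp w y) * (walsh_m n m f w * cnj (walsh_m n m f w))) / (s2 ^ n * s2 ^ n)"
proof -
  define W where "W = walsh_m n m f"
  define T where "T w = (\<Sum>z\<in>bitstrings n. sgn1 (f z \<noteq> dotp z w) * zeta m ^ wt z)" for w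
  have WT: "W w = T w / s2 ^ n" for w
    unfolding W_def T_def walsh_m_def of_real_walsh_factor by simp
  define c where "c = s2 ^ n * s2 ^ n * s2 ^ n"
  have "alg33_state m n (\<lambda>x. dotp x y) f f (replicate n False)
     = (\<Sum>z\<in>bitstrings n. (cnj (zeta m) ^ wt z / s2 ^ n) * (sgn1 (f z) *
          (\<Sum>w\<in>bitstrings n. sgn1 (dotp z w) * sgn1 (dotp w y) * W w / (s2 ^ n * s2 ^ n))))"
    unfolding alg33_state_def tensor_gate_def[of n "omega_bar m"]
  proof (rule sum.cong[OF refl])
    fix z assume "z \<in> bitstrings n"
    hence z: "length z = n" by (simp add: bs_iff)
    have 1: "(\<Prod>i<n. omega_bar m (replicate n False ! i) (z ! i)) = cnj (zeta m) ^ wt z / s2 ^ n"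
      using prod_omega_bar[of "replicate n False" n z m] z by (simp add: dotp_comm[of _ z] dotp_zero sgn1_def)
    show "(\<Prod>i<n. omega_bar m (replicate n False ! i) (z ! i)) *
         phase_oracle f (tensor_gate n hadamard (phase_oracle (\<lambda>x. dotp x y)
           (tensor_gate n (omega m) (phase_oracle f (tensor_gate n hadamard (zero_state n)))))) z
       = (cnj (zeta m) ^ wt z / s2 ^ n) * (sgn1 (f z) *
          (\<Sum>w\<in>bitstrings n. sgn1 (dotp z w) * sgn1 (dotp w y) * W w / (s2 ^ n * s2 ^ n)))"
      unfolding 1 phase_oracle_def[of f "tensor_gate n hadamard (phase_oracle _ _)"] st4[OF z] W_def
      by simp
  qed
  also have "\<dots> = (\<Sum>z\<in>bitstrings n. \<Sum>w\<in>bitstrings n.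
        (cnj (zeta m) ^ wt z * sgn1 (f z \<noteq> dotp z w)) * (sgn1 (dotp w y) * W w) / c)"
    unfolding sum_distrib_left
    by (intro sum.cong refl) (simp add: c_def sgn1_def)
  also have "\<dots> = (\<Sum>w\<in>bitstrings n. (\<Sum>z\<in>bitstrings n. cnj (zeta m) ^ wt z * sgn1 (f z \<noteq> dotp z w))
        * (sgn1 (dotp w y) * W w) / c)"
    by (subst sum.swap) (simp add: sum_distrib_right sum_divide_distrib)
  also have "\<dots> = (\<Sum>w\<in>bitstrings n. cnj (T w) * (sgn1 (dotp w y) * W w) / c)"
    unfolding T_def cnj_sum
    by (intro sum.cong refl) (simp add: sgn1_cnj mult.commute)
  also have "\<dots> = (\<Sum>w\<in>bitstrings n. sgn1 (dotp w y) * (W w * cnj (W w))) / (s2 ^ n * s2 ^ n)"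
    unfolding sum_divide_distrib
  proof (intro sum.cong refl)
    fix w
    have "T w = s2 ^ n * W w" using WT[of w] by simp
    thus "cnj (T w) * (sgn1 (dotp w y) * W w) / c = sgn1 (dotp w y) * (W w * cnj (W w)) / (s2 ^ n * s2 ^ n)"
      by (simp add: c_def)
  qed
  finally show ?thesis unfolding W_def .
qed

lemma flip_sign:
  assumes "length w = n" "length y = n" "j < n" "y ! j"
  shows "sgn1 (dotp (w[j := \<not> w ! j]) y) = - sgn1 (dotp w y)"
proof -
  let ?w = "w[j := \<not> w ! j]"
  have l: "length ?w = n" using assms by simp
  have A: "finite {..<n}" "j \<in> {..<n}" using assms by auto
  have "sgn1 (dotp ?w y) = sgn1 (?w ! j \<and> y ! j) * (\<Prod>i\<in>{..<n} - {j}. sgn1 (?w!i \<and> y!i))"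
    unfolding dotp_prod[OF l assms(2)] by (rule prod.remove[OF A])
  also have "(\<Prod>i\<in>{..<n} - {j}. sgn1 (?w!i \<and> y!i)) = (\<Prod>i\<in>{..<n} - {j}. sgn1 (w!i \<and> y!i))"
    by (rule prod.cong) auto
  also have "sgn1 (?w ! j \<and> y ! j) = - sgn1 (w ! j \<and> y ! j)"
    using assms by (simp add: sgn1_def)
  also have "(\<Prod>i\<in>{..<n} - {j}. sgn1 (w!i \<and> y!i)) = sgn1 (w ! j \<and> y ! j) * sgn1 (dotp w y)"
    unfolding dotp_prod[OF assms(1,2)] prod.remove[OF A, of "\<lambda>i. sgn1 (w!i \<and> y!i)"]
    by (simp add: mult.assoc[symmetric] sgn1_sq)
  finally show ?thesis by (simp add: mult.assoc[symmetric] sgn1_sq)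
qed

lemma char_sum_zero:
  assumes "length y = n" "y \<noteq> replicate n False"
  shows "(\<Sum>w\<in>bitstrings n. sgn1 (dotp w y)) = 0"
proof -
  obtain j where j: "j < n" "y ! j"
  proof -
    have "\<exists>j<n. y ! j"
    proof (rule ccontr)
      assume "\<not> (\<exists>j<n. y ! j)"
      hence "y = replicate n False" using assms(1) by (simp add: list_eq_iff_nth_eq)
      thus False using assms(2) by simp
    qed
    thus ?thesis using that by blast
  qed
  let ?S = "(\<Sum>w\<in>bitstrings n. sgn1 (dotp w y))"
  let ?p = "\<lambda>w::bool list. w[j := \<not> w ! j]"
  have "?S = (\<Sum>w\<in>bitstrings n. - sgn1 (dotp w y))"
  proof (rule sum.reindex_bij_witness[of _ ?p ?p])
    fix a assume "a \<in> bitstrings n"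
    thus "?p (?p a) = a" "?p a \<in> bitstrings n" using j by (auto simp: bs_iff)
    show "- sgn1 (dotp (?p a) y) = sgn1 (dotp a y)"
      using flip_sign[of a n y j] j assms \<open>a \<in> bitstrings n\<close> by (simp add: bs_iff)
  next
    fix b assume "b \<in> bitstrings n"
    thus "?p (?p b) = b" "?p b \<in> bitstrings n" using j by (auto simp: bs_iff)
  qed
  also have "\<dots> = - ?S" by (simp add: sum_negf)
  finally show ?thesis by simp
qed

theorem corollary3:
  fixes n m :: nat and f :: "bool list \<Rightarrow> bool" and y :: "bool list"
  assumes "0 < m" and "m_bent n m f" and "length y = n"
  shows "(y = replicate n False \<longrightarrow>
            alg33_prob m n (\<lambda>x. dotp x y) f f (replicate n False) \<noteq> 0) \<and>
         (y \<noteq> replicate n False \<longrightarrow>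
            alg33_prob m n (\<lambda>x. dotp x y) f f (replicate n False) = 0)"
proof -
  have W1: "walsh_m n m f w * cnj (walsh_m n m f w) = 1" if "w \<in> bitstrings n" for w
  proof -
    have "cmod (walsh_m n m f w) = 1" using assms(2) that by (simp add: m_bent_def)
    thus ?thesis by (metis complex_norm_square of_real_1 power_one)
  qed
  have den: "s2 ^ n * s2 ^ n = 2 ^ n"
    by (simp add: power_mult_distrib[symmetric] s2_sq)
  have amp': "alg33_state m n (\<lambda>x. dotp x y) f f (replicate n False)
      = (\<Sum>w\<in>bitstrings n. sgn1 (dotp w y)) / 2 ^ n"
    unfolding amp[OF assms(3)] den
    by (simp add: W1 cong: sum.cong)
  show ?thesis
  proof (intro conjI impI)
    assume y: "y = replicate n False"
    have "(\<Sum>w\<in>bitstrings n. sgn1 (dotp w y)) = of_nat (card (bitstrings n))"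
      unfolding y by (simp add: dotp_zero sgn1_def)
    moreover have "card (bitstrings n) \<noteq> 0"
      using finite_bitstrings[of n] by (metis card_0_eq bs_iff empty_iff length_replicate)
    ultimately have "alg33_state m n (\<lambda>x. dotp x y) f f (replicate n False) \<noteq> 0"
      unfolding amp' by simp
    thus "alg33_prob m n (\<lambda>x. dotp x y) f f (replicate n False) \<noteq> 0"
      by (simp add: alg33_prob_def)
  next
    assume "y \<noteq> replicate n False"
    hence "alg33_state m n (\<lambda>x. dotp x y) f f (replicate n False) = 0"
      unfolding amp' using char_sum_zero[OF assms(3)] by simp
    thus "alg33_prob m n (\<lambda>x. dotp x y) f f (replicate n False) = 0"
      by (simp add: alg33_prob_def)
  qed
qed

end
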